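(* Let $A=(a_{ij})$, $B=(b_{ij})$ be real $2\times2$ payoff tables and let $\mathcal C=\mathbb V(f)\subset\mathbb P^2_{\mathbb C}$ be the Spohn cubic. Then $\mathcal C$ is reducible (equivalently, $f$ is a nonzero polynomial that factors nontrivially over $\mathbb C$) if and only if $f\neq0$ and at least one of the following holds: (1) $a_{11}=a_{12}$; (2) $a_{11}=a_{21}$; (3) $a_{21}=a_{22}$; (4) $b_{11}=b_{12}$; (5) $b_{11}=b_{21}$; (6) $b_{12}=b_{22}$; (7) $a_{12}=a_{22}$ and $b_{21}=b_{22}$; (8) $a_{12}=a_{21}$ and $b_{12}=b_{21}$; (9) $0=a_{12}(b_{12}-b_{22})+a_{21}(b_{22}-b_{21})+a_{22}(b_{21}-b_{12})=a_{11}(b_{22}-b_{12})+a_{21}(b_{11}-b_{22})+a_{22}(b_{12}-b_{11})=a_{11}(b_{22}-b_{21})+a_{12}(b_{11}-b_{22})+a_{22}(b_{21}-b_{11})$; (10) $0=a_{11}(b_{12}-b_{21})+a_{12}(b_{21}-b_{22})+a_{21}(b_{22}-b_{12})=a_{12}(b_{11}-b_{21})+a_{21}(b_{12}-b_{11})+a_{22}(b_{21}-b_{12})=a_{11}(b_{11}-b_{21})+a_{21}(b_{22}-b_{11})+a_{22}(b_{21}-b_{22})$; (11) $0=a_{12}(b_{22}-b_{21})+a_{21}(b_{12}-b_{22})+a_{22}(b_{21}-b_{12})=a_{11}(b_{22}-b_{21})+a_{21}(b_{11}-b_{22})+a_{22}(b_{21}-b_{11})=a_{11}(b_{22}-b_{12})+a_{12}(b_{11}-b_{22})+a_{22}(b_{12}-b_{11})$;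 (12) $0=a_{11}(b_{12}-b_{21})+a_{12}(b_{22}-b_{12})+a_{21}(b_{21}-b_{22})=a_{12}(b_{11}-b_{12})+a_{21}(b_{21}-b_{11})+a_{22}(b_{12}-b_{21})=a_{11}(b_{11}-b_{21})+a_{12}(b_{22}-b_{12})+a_{21}(b_{21}-b_{11})+a_{22}(b_{12}-b_{22})$.
   Context: The Spohn cubic of the game is the plane curve $\mathcal C=\mathbb V(f)\subset\mathbb P^2_{\mathbb C}$ with coordinates $[x:y:z]$ (obtained from the Spohn variety by eliminating $p_{22}$ and renaming $x=p_{11},y=p_{12},z=p_{21}$), where $f=c_1x^2y+c_2x^2z+c_3xy^2+c_4xz^2+c_5y^2z+c_6yz^2+c_7xyz$ with $c_1=(a_{11}-a_{22})(b_{11}-b_{12})$, $c_2=(a_{11}-a_{21})(b_{22}-b_{11})$, $c_3=(a_{12}-a_{22})(b_{11}-b_{12})$, $c_4=(a_{11}-a_{21})(b_{22}-b_{21})$, $c_5=(a_{12}-a_{22})(b_{21}-b_{12})$, $c_6=(a_{12}-a_{21})(b_{22}-b_{21})$, $c_7=(a_{12}-a_{21})(b_{22}-b_{11})+(a_{11}-a_{22})(b_{21}-b_{12})$. *)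

theory Defs
  imports Complex_Main "HOL-Computational_Algebra.Computational_Algebra"
begin

text \<open>Polynomials in three variables x, y, z over the complex numbers are represented as
  iterated univariate polynomials: C[x][y][z] = complex poly poly poly.
  The outermost variable is z, the middle one y, the innermost one x.\<close>

definition pX :: "complex poly poly poly" where "pX = [:[:[:0, 1:]:]:]"
definition pY :: "complex poly poly poly" where "pY = [:[:0, 1:]:]"
definition pZ :: "complex poly poly poly" where "pZ = [:0, 1:]"

definition cst :: "real \<Rightarrow> complex poly poly poly" where
  "cst r = [:[:[:complex_of_real r:]:]:]"

definition spohn_cubic ::
  "real \<Rightarrow> real \<Rightarrow> real \<Rightarrow> real \<Rightarrow> real \<Rightarrow> real \<Rightarrow> real \<Rightarrow> real \<Rightarrow> complex poly poly poly" where
  "spohn_cubic a11 a12 a21 a22 b11 b12 b21 b22 =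
     (let c1 = (a11 - a22) * (b11 - b12);
          c2 = (a11 - a21) * (b22 - b11);
          c3 = (a12 - a22) * (b11 - b12);
          c4 = (a11 - a21) * (b22 - b21);
          c5 = (a12 - a22) * (b21 - b12);
          c6 = (a12 - a21) * (b22 - b21);
          c7 = (a12 - a21) * (b22 - b11) + (a11 - a22) * (b21 - b12)
      in cst c1 * pX^2 * pY + cst c2 * pX^2 * pZ + cst c3 * pX * pY^2 + cst c4 * pX * pZ^2
         + cst c5 * pY^2 * pZ + cst c6 * pY * pZ^2 + cst c7 * pX * pY * pZ)"

definition reducible :: "'a::comm_semiring_1 \<Rightarrow> bool" where
  "reducible p \<longleftrightarrow> p \<noteq> 0 \<and> \<not> p dvd 1 \<and> \<not> irreducible p"

end

theory Submission
  imports Defs "HOL-Computational_Algebra.Field_as_Ring"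
begin

definition X :: "complex poly poly" where "X = [:[:0,1:]:]"
definition Y :: "complex poly poly" where "Y = [:0,1:]"
definition kc :: "complex \<Rightarrow> complex poly poly" where "kc c = [:[:c:]:]"
definition ev :: "complex poly poly \<Rightarrow> complex \<Rightarrow> complex \<Rightarrow> complex" where
  "ev P x y = poly (poly P [:y:]) x"
definition lf :: "complex \<Rightarrow> complex \<Rightarrow> complex poly poly" where
  "lf a b = kc a * X + kc b * Y"

lemma ev_add[simp]: "ev (P+Q) x y = ev P x y + ev Q x y" by (simp add: ev_def)
lemma ev_diff[simp]: "ev (P-Q) x y = ev P x y - ev Q x y" by (simp add: ev_def)
lemma ev_minus[simp]: "ev (-P) x y = - ev P x y" by (simp add: ev_def)
lemma ev_mult[simp]: "ev (P*Q) x y = ev P x y * ev Q x y" by (simp add: ev_def)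
lemma ev_X[simp]: "ev X x y = x" by (simp add: ev_def X_def)
lemma ev_Y[simp]: "ev Y x y = y" by (simp add: ev_def Y_def)
lemma ev_kc[simp]: "ev (kc c) x y = c" by (simp add: ev_def kc_def)
lemma ev_0[simp]: "ev 0 x y = 0" by (simp add: ev_def)
lemma ev_lf[simp]: "ev (lf a b) x y = a*x + b*y" by (simp add: lf_def)

lemma kc_add: "kc (a+b) = kc a + kc b" by (simp add: kc_def)
lemma kc_mult: "kc (a*b) = kc a * kc b" by (simp add: kc_def)
lemma kc_diff: "kc (a-b) = kc a - kc b" by (simp add: kc_def)
lemma kc_minus: "kc (-a) = - kc a" by (simp add: kc_def)
lemma kc_0[simp]: "kc 0 = 0" by (simp add: kc_def)
lemma kc_1[simp]: "kc 1 = 1" by (simp add: kc_def one_pCons)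
lemma kc_eq_0[simp]: "kc a = 0 \<longleftrightarrow> a = 0" by (simp add: kc_def)
lemma kc_unit: "a \<noteq> 0 \<Longrightarrow> is_unit (kc a)"
  by (simp add: kc_def is_unit_const_poly_iff dvd_field_iff)

lemma unit_R: assumes "is_unit (u::complex poly poly)" obtains c where "u = kc c" "c \<noteq> 0"
proof -
  obtain p where p: "u = [:p:]" "p dvd 1" using assms by (rule is_unit_polyE)
  obtain c where c: "p = [:c:]" "c dvd 1" using p(2) by (rule is_unit_polyE)
  have "c \<noteq> 0" using c(2) by (metis dvd_0_left_iff zero_neq_one)
  show ?thesis using that[of c] p c \<open>c\<noteq>0\<close> by (simp add: kc_def)
qed

lemma lf_alt: "lf a b = [:[:0,a:], [:b:]:]"
  by (simp add: lf_def kc_def X_def Y_def)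

lemma lin_irred_aux:
  fixes c :: "complex poly" assumes "b \<noteq> 0"
  shows "irreducible [:c, [:b:]:]"
proof (rule irreducibleI)
  show "[:c, [:b:]:] \<noteq> 0" using assms by simp
  show "\<not> [:c, [:b:]:] dvd 1" using assms by (simp add: is_unit_poly_iff)
  fix g h assume gh: "[:c, [:b:]:] = g * h"
  have ub: "is_unit [:b:]" using assms by (simp add: is_unit_const_poly_iff dvd_field_iff)
  have g0: "g \<noteq> 0" and h0: "h \<noteq> 0" using gh assms by auto
  have "degree (g*h) = 1" using gh[symmetric] assms by simp
  then have deg: "degree g + degree h = 1" using g0 h0 by (simp add: degree_mult_eq)
  show "is_unit g \<or> is_unit h"
  proof (cases "degree g = 0")
    case True
    then obtain g0 where g: "g = [:g0:]" by (rule degree_eq_zeroE)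
    have "coeff (g*h) 1 = [:b:]" using gh[symmetric] by simp
    then have "g0 * coeff h 1 = [:b:]" using g by simp
    then have "g0 dvd [:b:]" by (metis dvd_triv_left)
    then have "is_unit g0" using ub dvd_unit_imp_unit by blast
    then show ?thesis using g by (simp add: is_unit_const_poly_iff)
  next
    case False
    then have "degree h = 0" using deg by simp
    then obtain h0 where h: "h = [:h0:]" by (rule degree_eq_zeroE)
    have "coeff (g*h) 1 = [:b:]" using gh[symmetric] by simp
    then have "h0 * coeff g 1 = [:b:]" using h by (simp add: mult.commute)
    then have "h0 dvd [:b:]" by (metis dvd_triv_left)
    then have "is_unit h0" using ub dvd_unit_imp_unit by blast
    then show ?thesis using h by (simp add: is_unit_const_poly_iff)
  qed
qed

lemma lf_irred: assumes "a \<noteq> 0 \<or> b \<noteq> 0" shows "irreducible (lf a b)"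
proof (cases "b = 0")
  case True
  then have "a \<noteq> 0" using assms by simp
  have "irreducible [:0,a:]" using \<open>a\<noteq>0\<close> by (rule irreducible_linear_field_poly)
  then have "irreducible [:[:0,a:]:]" by (subst irreducible_const_poly_iff)
  then show ?thesis using True by (simp add: lf_alt)
next
  case False
  then show ?thesis unfolding lf_alt by (rule lin_irred_aux)
qed

lemma lf_prime: "a \<noteq> 0 \<or> b \<noteq> 0 \<Longrightarrow> prime_elem (lf a b)"
  by (rule irreducible_imp_prime_elem, rule lf_irred)

lemma lf_root: "ev (lf a b) b (-a) = 0" by (simp add: algebra_simps)

lemma lf_dvd_ev: assumes "lf a b dvd P" shows "ev P b (-a) = 0"
proof -
  from assms obtain Q where "P = lf a b * Q" by (elim dvdE)
  then show ?thesis by (simp add: algebra_simps)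
qed

lemma X_lf: "X = lf 1 0" by (simp add: lf_def)
lemma Y_lf: "Y = lf 0 1" by (simp add: lf_def)

definition E :: "complex poly poly \<Rightarrow> complex poly poly poly" where "E a = [:a:]"
lemma E_add: "E (a+b) = E a + E b" by (simp add: E_def)
lemma E_diff: "E (a-b) = E a - E b" by (simp add: E_def)
lemma E_minus: "E (-a) = - E a" by (simp add: E_def)
lemma E_mult: "E (a*b) = E a * E b" by (simp add: E_def)
lemma pX_E: "pX = E X" by (simp add: pX_def E_def X_def)
lemma pY_E: "pY = E Y" by (simp add: pY_def E_def Y_def)
lemma cst_E: "cst r = E (kc (complex_of_real r))" by (simp add: cst_def E_def kc_def)
lemma kc_cor_diff: "kc (complex_of_real (a - b)) = kc (complex_of_real a) - kc (complex_of_real b)"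
  by (simp add: kc_diff)
lemma kc_cor_add: "kc (complex_of_real (a + b)) = kc (complex_of_real a) + kc (complex_of_real b)"
  by (simp add: kc_add)
lemma kc_cor_mult: "kc (complex_of_real (a * b)) = kc (complex_of_real a) * kc (complex_of_real b)"
  by (simp add: kc_mult)
lemma three_E: "[:c, b, a:] = E c + pZ * E b + pZ^2 * E a"
  by (simp add: E_def pZ_def power2_eq_square)

abbreviation cor :: "real \<Rightarrow> complex" where "cor \<equiv> complex_of_real"

definition SA where "SA a11 a12 a21 a22 b11 b12 b21 b22 =
   - (kc (cor (b21 - b22)) * lf (cor (a11 - a21)) (cor (a12 - a21)))"
definition SB where "SB a11 a12 a21 a22 b11 b12 b21 b22 =
   kc (cor (b21 - b12)) * Y * lf (cor (a11 - a22)) (cor (a12 - a22))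
   - kc (cor (b11 - b22)) * X * lf (cor (a11 - a21)) (cor (a12 - a21))"
definition SC where "SC a11 a12 a21 a22 b11 b12 b21 b22 =
   kc (cor (b11 - b12)) * X * Y * lf (cor (a11 - a22)) (cor (a12 - a22))"

lemma spohn_z: "spohn_cubic a11 a12 a21 a22 b11 b12 b21 b22 =
  [: SC a11 a12 a21 a22 b11 b12 b21 b22, SB a11 a12 a21 a22 b11 b12 b21 b22,
     SA a11 a12 a21 a22 b11 b12 b21 b22 :]"
  unfolding three_E spohn_cubic_def Let_def SA_def SB_def SC_def lf_def
  unfolding cst_E pX_E pY_E E_add E_diff E_minus E_mult kc_cor_diff kc_cor_add kc_cor_mult
  by algebra

definition o3 :: "complex poly poly poly \<Rightarrow> complex" where
  "o3 p = coeff (coeff (coeff p 0) 0) 0"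
lemma o3_mult[simp]: "o3 (p*q) = o3 p * o3 q" by (simp add: o3_def coeff_mult_0)
lemma o3_add[simp]: "o3 (p+q) = o3 p + o3 q" by (simp add: o3_def)
lemma o3_diff[simp]: "o3 (p-q) = o3 p - o3 q" by (simp add: o3_def)
lemma o3_minus[simp]: "o3 (-p) = - o3 p" by (simp add: o3_def)
lemma o3_pX[simp]: "o3 pX = 0" by (simp add: o3_def pX_def)
lemma o3_pY[simp]: "o3 pY = 0" by (simp add: o3_def pY_def)
lemma o3_pZ[simp]: "o3 pZ = 0" by (simp add: o3_def pZ_def)
lemma o3_cst[simp]: "o3 (cst r) = complex_of_real r" by (simp add: o3_def cst_def)
lemma o3_1[simp]: "o3 1 = 1" by (simp add: o3_def)
lemma o3_pow[simp]: "o3 (p^n) = (o3 p)^n" by (induction n) auto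

lemma o3_unit: assumes "is_unit p" shows "o3 p \<noteq> 0"
proof -
  obtain c where c: "p = [:c:]" "c dvd 1" using assms by (rule is_unit_polyE)
  obtain d where d: "c = [:d:]" "d dvd 1" using c(2) by (rule is_unit_polyE)
  obtain e where e: "d = [:e:]" "e dvd 1" using d(2) by (rule is_unit_polyE)
  have "e \<noteq> 0" using e(2) by (metis dvd_0_left_iff zero_neq_one)
  then show ?thesis using c d e by (simp add: o3_def)
qed

lemma reducible_intro:
  assumes "f \<noteq> 0" "f = l * q" "o3 l = 0" "o3 q = 0"
  shows "reducible f"
  unfolding reducible_def
proof (intro conjI)
  show "f \<noteq> 0" by fact
  have "o3 f = 0" using assms(2,3) by simp
  then show "\<not> f dvd 1" using o3_unit by metis
  show "\<not> irreducible f"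
  proof
    assume "irreducible f"
    then have "is_unit l \<or> is_unit q" using assms(2) by (rule irreducibleD)
    then show False using o3_unit assms(3,4) by metis
  qed
qed

lemma cst_add: "cst (a+b) = cst a + cst b" by (simp add: cst_E E_add kc_add)
lemma cst_diff: "cst (a-b) = cst a - cst b" by (simp add: cst_E E_diff kc_diff)
lemma cst_mult: "cst (a*b) = cst a * cst b" by (simp add: cst_E E_mult kc_mult)
lemma cst_minus: "cst (-a) = - cst a" by (simp add: cst_E E_minus kc_minus)
lemma cst_0[simp]: "cst 0 = 0" by (simp add: cst_def)
lemma cst_1: "cst 1 = 1" by (simp add: cst_def one_pCons)

lemma spohn_struct: "spohn_cubic a11 a12 a21 a22 b11 b12 b21 b22 =
   pY * (cst (b11-b12)*pX + cst (b21-b12)*pZ) * (cst (a11-a22)*pX + cst (a12-a22)*pY)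
 - pZ * (cst (a11-a21)*pX + cst (a12-a21)*pY) * (cst (b11-b22)*pX + cst (b21-b22)*pZ)"
  unfolding spohn_cubic_def Let_def cst_diff cst_add cst_mult
  by algebra

lemma quad_eq:
  assumes "p1*q1 = r1*s1" "p1*q2 + p2*q1 = r1*s2 + r2*s1" "p2*q2 = r2*s2"
  shows "(cst p1*pX + cst p2*pY)*(cst q1*pX + cst q2*pY) = (cst r1*pX + cst r2*pY)*(cst s1*pX + cst s2*pY)"
proof -
  have "(cst p1*pX + cst p2*pY)*(cst q1*pX + cst q2*pY) =
     cst (p1*q1)*pX^2 + cst (p1*q2 + p2*q1)*pX*pY + cst (p2*q2)*pY^2"
    unfolding cst_add cst_mult by algebra
  also have "\<dots> = cst (r1*s1)*pX^2 + cst (r1*s2 + r2*s1)*pX*pY + cst (r2*s2)*pY^2"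
    using assms by simp
  also have "\<dots> = (cst r1*pX + cst r2*pY)*(cst s1*pX + cst s2*pY)"
    unfolding cst_add cst_mult by algebra
  finally show ?thesis .
qed

definition qrem where "qrem a11 a12 a21 a22 b11 b12 b21 b22 w =
  pY * (cst (a11-a22)*pX + cst (a12-a22)*pY) * cst (b21-b12)
  - (cst (a11-a21)*pX + cst (a12-a21)*pY) * (cst (b11-b22)*pX + cst (b21-b22)*(pZ + w))"
definition Rrem where "Rrem a11 a12 a21 a22 b11 b12 b21 b22 w =
  pY * (cst (b11-b12)*pX + cst (b21-b12)*w) * (cst (a11-a22)*pX + cst (a12-a22)*pY)
  - w * (cst (a11-a21)*pX + cst (a12-a21)*pY) * (cst (b11-b22)*pX + cst (b21-b22)*w)"

lemma spohn_rem: "spohn_cubic a11 a12 a21 a22 b11 b12 b21 b22 =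
   (pZ - w) * qrem a11 a12 a21 a22 b11 b12 b21 b22 w + Rrem a11 a12 a21 a22 b11 b12 b21 b22 w"
  unfolding spohn_struct qrem_def Rrem_def by algebra

lemma red_rem:
  assumes "spohn_cubic a11 a12 a21 a22 b11 b12 b21 b22 \<noteq> 0"
    "Rrem a11 a12 a21 a22 b11 b12 b21 b22 w = 0" "o3 w = 0"
  shows "reducible (spohn_cubic a11 a12 a21 a22 b11 b12 b21 b22)"
proof -
  have "spohn_cubic a11 a12 a21 a22 b11 b12 b21 b22 = (pZ - w) * qrem a11 a12 a21 a22 b11 b12 b21 b22 w"
    using spohn_rem[of a11 a12 a21 a22 b11 b12 b21 b22 w] assms(2) by simp
  then show ?thesis by (rule reducible_intro[OF assms(1)]) (simp_all add: assms qrem_def)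
qed

abbreviation "SS b11 b12 b21 b22 \<equiv> cst (b11-b12)*pX + cst (b21-b12)*pZ"
abbreviation "TT a11 a12 a21 a22 \<equiv> cst (a11-a22)*pX + cst (a12-a22)*pY"
abbreviation "VV a11 a12 a21 a22 \<equiv> cst (a11-a21)*pX + cst (a12-a21)*pY"
abbreviation "WW b11 b12 b21 b22 \<equiv> cst (b11-b22)*pX + cst (b21-b22)*pZ"

lemma if_c1: assumes "f \<noteq> 0" "f = spohn_cubic a11 a12 a21 a22 b11 b12 b21 b22" "a11 = a12"
  shows "reducible f"
proof -
  have "f = (pX + pY) * (pY * SS b11 b12 b21 b22 * cst (a11-a22) - pZ * WW b11 b12 b21 b22 * cst (a11-a21))"
    unfolding assms(2) spohn_struct assms(3) cst_diff by algebra
  then show ?thesis by (rule reducible_intro[OF assms(1)]) simp_all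
qed

lemma if_c2: assumes "f \<noteq> 0" "f = spohn_cubic a11 a12 a21 a22 b11 b12 b21 b22" "a11 = a21"
  shows "reducible f"
proof -
  have "f = pY * (SS b11 b12 b21 b22 * TT a11 a12 a21 a22 - pZ * cst (a12-a21) * WW b11 b12 b21 b22)"
    unfolding assms(2) spohn_struct assms(3) cst_diff by algebra
  then show ?thesis by (rule reducible_intro[OF assms(1)]) simp_all
qed

lemma if_c3: assumes "f \<noteq> 0" "f = spohn_cubic a11 a12 a21 a22 b11 b12 b21 b22" "a21 = a22"
  shows "reducible f"
proof -
  have "f = TT a11 a12 a21 a22 * (pY * SS b11 b12 b21 b22 - pZ * WW b11 b12 b21 b22)"
    unfolding assms(2) spohn_struct assms(3) cst_diff by algebra
  then show ?thesis by (rule reducible_intro[OF assms(1)]) simp_all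
qed

lemma if_c4: assumes "f \<noteq> 0" "f = spohn_cubic a11 a12 a21 a22 b11 b12 b21 b22" "b11 = b12"
  shows "reducible f"
proof -
  have "f = pZ * (pY * cst (b21-b12) * TT a11 a12 a21 a22 - VV a11 a12 a21 a22 * WW b11 b12 b21 b22)"
    unfolding assms(2) spohn_struct assms(3) cst_diff by algebra
  then show ?thesis by (rule reducible_intro[OF assms(1)]) simp_all
qed

lemma if_c5: assumes "f \<noteq> 0" "f = spohn_cubic a11 a12 a21 a22 b11 b12 b21 b22" "b11 = b21"
  shows "reducible f"
proof -
  have "f = (pX + pZ) * (pY * cst (b11-b12) * TT a11 a12 a21 a22 - pZ * VV a11 a12 a21 a22 * cst (b11-b22))"
    unfolding assms(2) spohn_struct assms(3) cst_diff by algebra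
  then show ?thesis by (rule reducible_intro[OF assms(1)]) simp_all
qed

lemma if_c6: assumes "f \<noteq> 0" "f = spohn_cubic a11 a12 a21 a22 b11 b12 b21 b22" "b12 = b22"
  shows "reducible f"
proof -
  have "f = SS b11 b12 b21 b22 * (pY * TT a11 a12 a21 a22 - pZ * VV a11 a12 a21 a22)"
    unfolding assms(2) spohn_struct assms(3) cst_diff by algebra
  then show ?thesis by (rule reducible_intro[OF assms(1)]) simp_all
qed

lemma if_c7: assumes "f \<noteq> 0" "f = spohn_cubic a11 a12 a21 a22 b11 b12 b21 b22" "a12 = a22" "b21 = b22"
  shows "reducible f"
proof -
  have "f = pX * (pY * SS b11 b12 b21 b22 * cst (a11-a22) - pZ * VV a11 a12 a21 a22 * cst (b11-b22))"
    unfolding assms(2) spohn_struct assms(3) assms(4) cst_diff by algebra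
  then show ?thesis by (rule reducible_intro[OF assms(1)]) simp_all
qed

lemma if_c8: assumes "f \<noteq> 0" "f = spohn_cubic a11 a12 a21 a22 b11 b12 b21 b22" "a12 = a21" "b12 = b21"
  shows "reducible f"
proof -
  have "f = pX * (pY * cst (b11-b12) * TT a11 a12 a21 a22 - pZ * cst (a11-a21) * WW b11 b12 b21 b22)"
    unfolding assms(2) spohn_struct assms(3) assms(4) cst_diff by algebra
  then show ?thesis by (rule reducible_intro[OF assms(1)]) simp_all
qed

lemma if_c9: assumes "f \<noteq> 0" "f = spohn_cubic a11 a12 a21 a22 b11 b12 b21 b22"
  "a12 * (b12 - b22) + a21 * (b22 - b21) + a22 * (b21 - b12) = 0"
  "a11 * (b22 - b12) + a21 * (b11 - b22) + a22 * (b12 - b11) = 0"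
  "a11 * (b22 - b21) + a12 * (b11 - b22) + a22 * (b21 - b11) = 0"
  shows "reducible f"
proof -
  have q: "(cst (b11-b12)*pX + cst (b21-b12)*pY) * TT a11 a12 a21 a22 =
      VV a11 a12 a21 a22 * (cst (b11-b22)*pX + cst (b21-b22)*pY)"
    by (rule quad_eq) (use assms(3-5) in algebra)+
  have "Rrem a11 a12 a21 a22 b11 b12 b21 b22 pY = pY * ((cst (b11-b12)*pX + cst (b21-b12)*pY) * TT a11 a12 a21 a22 -
      VV a11 a12 a21 a22 * (cst (b11-b22)*pX + cst (b21-b22)*pY))"
    unfolding Rrem_def by algebra
  then have "Rrem a11 a12 a21 a22 b11 b12 b21 b22 pY = 0" using q by simp
  then show ?thesis using red_rem[of a11 a12 a21 a22 b11 b12 b21 b22 pY] assms(1,2) by simp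
qed

lemma if_c10: assumes "f \<noteq> 0" "f = spohn_cubic a11 a12 a21 a22 b11 b12 b21 b22"
  "a11 * (b12 - b21) + a12 * (b21 - b22) + a21 * (b22 - b12) = 0"
  "a12 * (b11 - b21) + a21 * (b12 - b11) + a22 * (b21 - b12) = 0"
  "a11 * (b11 - b21) + a21 * (b22 - b11) + a22 * (b21 - b22) = 0"
  "b21 \<noteq> b22"
  shows "reducible f"
proof -
  define k where "k = (b11 - b12) / (b21 - b22)"
  have hk: "k * (b21 - b22) = b11 - b12" using assms(6) by (simp add: k_def)
  have q: "(cst (b11-b12)*pX + cst ((b21-b12)*k)*pY) * TT a11 a12 a21 a22 =
      (cst (k*(a11-a21))*pX + cst (k*(a12-a21))*pY) * (cst (b11-b22)*pX + cst ((b21-b22)*k)*pY)"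
    by (rule quad_eq) (use assms(3-5) hk in algebra)+
  have "Rrem a11 a12 a21 a22 b11 b12 b21 b22 (cst k * pY) = pY * ((cst (b11-b12)*pX + cst ((b21-b12)*k)*pY) * TT a11 a12 a21 a22 -
      (cst (k*(a11-a21))*pX + cst (k*(a12-a21))*pY) * (cst (b11-b22)*pX + cst ((b21-b22)*k)*pY))"
    unfolding Rrem_def cst_mult by algebra
  then have "Rrem a11 a12 a21 a22 b11 b12 b21 b22 (cst k * pY) = 0" using q by simp
  then show ?thesis using red_rem[of a11 a12 a21 a22 b11 b12 b21 b22 "cst k * pY"] assms(1,2) by simp
qed

lemma if_c11: assumes "f \<noteq> 0" "f = spohn_cubic a11 a12 a21 a22 b11 b12 b21 b22"
  "a12 * (b22 - b21) + a21 * (b12 - b22) + a22 * (b21 - b12) = 0"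
  "a11 * (b22 - b21) + a21 * (b11 - b22) + a22 * (b21 - b11) = 0"
  "a11 * (b22 - b12) + a12 * (b11 - b22) + a22 * (b12 - b11) = 0"
  "a21 \<noteq> a22"
  shows "reducible f"
proof -
  define k where "k = -1 / (a21 - a22)"
  have hk: "k * (a21 - a22) = -1" using assms(6) by (simp add: k_def)
  have q: "(cst 0*pX + cst 1*pY) * (cst ((b11-b12) + (b21-b12)*k*(a11-a22))*pX + cst ((b21-b12)*k*(a12-a22))*pY) =
      (cst (k*(a11-a21))*pX + cst (k*(a12-a21))*pY) * (cst ((b11-b22) + (b21-b22)*k*(a11-a22))*pX + cst ((b21-b22)*k*(a12-a22))*pY)"
    by (rule quad_eq) (use assms(3-5) hk in algebra)+
  have "Rrem a11 a12 a21 a22 b11 b12 b21 b22 (cst k * TT a11 a12 a21 a22) = TT a11 a12 a21 a22 * (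
      (cst 0*pX + cst 1*pY) * (cst ((b11-b12) + (b21-b12)*k*(a11-a22))*pX + cst ((b21-b12)*k*(a12-a22))*pY) -
      (cst (k*(a11-a21))*pX + cst (k*(a12-a21))*pY) * (cst ((b11-b22) + (b21-b22)*k*(a11-a22))*pX + cst ((b21-b22)*k*(a12-a22))*pY))"
    unfolding Rrem_def cst_mult cst_add cst_0 cst_1 by algebra
  then have "Rrem a11 a12 a21 a22 b11 b12 b21 b22 (cst k * TT a11 a12 a21 a22) = 0" using q by simp
  then show ?thesis using red_rem[of a11 a12 a21 a22 b11 b12 b21 b22 "cst k * TT a11 a12 a21 a22"] assms(1,2) by simp
qed

lemma if_c12: assumes "f \<noteq> 0" "f = spohn_cubic a11 a12 a21 a22 b11 b12 b21 b22"
  "a11 * (b12 - b21) + a12 * (b22 - b12) + a21 * (b21 - b22) = 0"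
  "a12 * (b11 - b12) + a21 * (b21 - b11) + a22 * (b12 - b21) = 0"
  "a11 * (b11 - b21) + a12 * (b22 - b12) + a21 * (b21 - b11) + a22 * (b12 - b22) = 0"
  "a11 \<noteq> a12"
  shows "reducible f"
proof -
  define k where "k = -1 / (a11 - a12)"
  have hk: "k * (a11 - a12) = -1" using assms(6) by (simp add: k_def)
  have q: "(cst 0*pX + cst 1*pY) * (cst ((b11-b12) + (b21-b12)*k*(a11-a22))*pX + cst ((b21-b12)*k*(a12-a22))*pY) =
      (cst (k*(a11-a21))*pX + cst (k*(a12-a21))*pY) * (cst ((b11-b22) + (b21-b22)*k*(a11-a22))*pX + cst ((b21-b22)*k*(a12-a22))*pY)"
    by (rule quad_eq) (use assms(3-5) hk in algebra)+
  have "Rrem a11 a12 a21 a22 b11 b12 b21 b22 (cst k * TT a11 a12 a21 a22) = TT a11 a12 a21 a22 * (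
      (cst 0*pX + cst 1*pY) * (cst ((b11-b12) + (b21-b12)*k*(a11-a22))*pX + cst ((b21-b12)*k*(a12-a22))*pY) -
      (cst (k*(a11-a21))*pX + cst (k*(a12-a21))*pY) * (cst ((b11-b22) + (b21-b22)*k*(a11-a22))*pX + cst ((b21-b22)*k*(a12-a22))*pY))"
    unfolding Rrem_def cst_mult cst_add cst_0 cst_1 by algebra
  then have "Rrem a11 a12 a21 a22 b11 b12 b21 b22 (cst k * TT a11 a12 a21 a22) = 0" using q by simp
  then show ?thesis using red_rem[of a11 a12 a21 a22 b11 b12 b21 b22 "cst k * TT a11 a12 a21 a22"] assms(1,2) by simp
qed

lemma if_dir:
  fixes a11 a12 a21 a22 b11 b12 b21 b22 :: real
  assumes "spohn_cubic a11 a12 a21 a22 b11 b12 b21 b22 \<noteq> 0"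
  and "(a11 = a12 \<or> a11 = a21 \<or> a21 = a22 \<or> b11 = b12 \<or> b11 = b21 \<or> b12 = b22 \<or>
     (a12 = a22 \<and> b21 = b22) \<or> (a12 = a21 \<and> b12 = b21) \<or>
     (a12 * (b12 - b22) + a21 * (b22 - b21) + a22 * (b21 - b12) = 0 \<and>
      a11 * (b22 - b12) + a21 * (b11 - b22) + a22 * (b12 - b11) = 0 \<and>
      a11 * (b22 - b21) + a12 * (b11 - b22) + a22 * (b21 - b11) = 0) \<or>
     (a11 * (b12 - b21) + a12 * (b21 - b22) + a21 * (b22 - b12) = 0 \<and>
      a12 * (b11 - b21) + a21 * (b12 - b11) + a22 * (b21 - b12) = 0 \<and>
      a11 * (b11 - b21) + a21 * (b22 - b11) + a22 * (b21 - b22) = 0) \<or>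
     (a12 * (b22 - b21) + a21 * (b12 - b22) + a22 * (b21 - b12) = 0 \<and>
      a11 * (b22 - b21) + a21 * (b11 - b22) + a22 * (b21 - b11) = 0 \<and>
      a11 * (b22 - b12) + a12 * (b11 - b22) + a22 * (b12 - b11) = 0) \<or>
     (a11 * (b12 - b21) + a12 * (b22 - b12) + a21 * (b21 - b22) = 0 \<and>
      a12 * (b11 - b12) + a21 * (b21 - b11) + a22 * (b12 - b21) = 0 \<and>
      a11 * (b11 - b21) + a12 * (b22 - b12) + a21 * (b21 - b11) + a22 * (b12 - b22) = 0))"
  shows "reducible (spohn_cubic a11 a12 a21 a22 b11 b12 b21 b22)"
proof -
  note f = assms(1) refl
  note r1 = if_c1[OF f] and r2 = if_c2[OF f] and r3 = if_c3[OF f] and r4 = if_c4[OF f]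
   and r5 = if_c5[OF f] and r6 = if_c6[OF f] and r7 = if_c7[OF f] and r8 = if_c8[OF f]
   and r9 = if_c9[OF f] and r10 = if_c10[OF f] and r11 = if_c11[OF f] and r12 = if_c12[OF f]
  from assms(2) show ?thesis
  proof (elim disjE conjE)
    assume h: "a11 * (b12 - b21) + a12 * (b21 - b22) + a21 * (b22 - b12) = 0"
      "a12 * (b11 - b21) + a21 * (b12 - b11) + a22 * (b21 - b12) = 0"
      "a11 * (b11 - b21) + a21 * (b22 - b11) + a22 * (b21 - b22) = 0"
    show ?thesis
    proof (cases "b21 = b22")
      case True
      then have "(a11 - a21) * (b12 - b21) = 0" using h(1) by (simp add: algebra_simps)
      then have "a11 = a21 \<or> b12 = b22" using True by auto
      then show ?thesis using r2 r6 by blast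
    next
      case False then show ?thesis using r10 h by blast
    qed
  next
    assume h: "a12 * (b22 - b21) + a21 * (b12 - b22) + a22 * (b21 - b12) = 0"
      "a11 * (b22 - b21) + a21 * (b11 - b22) + a22 * (b21 - b11) = 0"
      "a11 * (b22 - b12) + a12 * (b11 - b22) + a22 * (b12 - b11) = 0"
    show ?thesis
    proof (cases "a21 = a22")
      case True then show ?thesis using r3 by blast
    next
      case False then show ?thesis using r11 h by blast
    qed
  next
    assume h: "a11 * (b12 - b21) + a12 * (b22 - b12) + a21 * (b21 - b22) = 0"
      "a12 * (b11 - b12) + a21 * (b21 - b11) + a22 * (b12 - b21) = 0"
      "a11 * (b11 - b21) + a12 * (b22 - b12) + a21 * (b21 - b11) + a22 * (b12 - b22) = 0"
    show ?thesis
    proof (cases "a11 = a12")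
      case True then show ?thesis using r1 by blast
    next
      case False then show ?thesis using r12 h by blast
    qed
  qed (use r1 r2 r3 r4 r5 r6 r7 r8 r9 in blast)+
qed

definition "C9s A1 A2 A3 B1 B3 B4 \<longleftrightarrow> (-A2*B4 - A3*B3 + A3*B4 = 0 \<and> A1*B4 + A3*B1 - A3*B4 = 0 \<and> -A1*B3 + A1*B4 + A2*B1 - A2*B4 = (0::complex))"
definition "C10s A1 A2 A3 B1 B3 B4 \<longleftrightarrow> (-A1*B3 + A2*B3 - A2*B4 + A3*B4 = 0 \<and> A2*B1 - A2*B3 - A3*B1 = 0 \<and> A1*B1 - A1*B3 - A3*B1 + A3*B4 = (0::complex))"
definition "C11s A1 A2 A3 B1 B3 B4 \<longleftrightarrow> (-A2*B3 + A2*B4 - A3*B4 = 0 \<and> -A1*B3 + A1*B4 + A3*B1 - A3*B4 = 0 \<and> A1*B4 + A2*B1 - A2*B4 = (0::complex))"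
definition "C12s A1 A2 A3 B1 B3 B4 \<longleftrightarrow> (-A1*B3 + A2*B4 + A3*B3 - A3*B4 = 0 \<and> A2*B1 - A3*B1 + A3*B3 = 0 \<and> A1*B1 - A1*B3 + A2*B4 - A3*B1 + A3*B3 = (0::complex))"

locale NC =
  fixes A1 A2 A3 B1 B3 B4 :: complex
  assumes n1: "A1 \<noteq> A2" and n2: "A1 \<noteq> A3" and n3: "A3 \<noteq> 0" and n4: "B1 \<noteq> 0"
    and n5: "B1 \<noteq> B3" and n6: "B4 \<noteq> 0" and n7: "\<not> (A2 = 0 \<and> B3 = B4)"
    and n8: "\<not> (A2 = A3 \<and> B3 = 0)"
begin

lemma keyB: "B1*(B3-B4) - B3*(B1-B4) \<noteq> 0"
proof -
  have "B1*(B3-B4) - B3*(B1-B4) = B4*(B3-B1)" by (simp add: algebra_simps)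
  then show ?thesis using n5 n6 by auto
qed

lemma sl_cX: "(B3-B4)*(A2-A3) = 0 \<Longrightarrow> B3*A2 = 0 \<Longrightarrow> False"
  using n3 n6 n7 n8 by auto

lemma sl_cY: "(B3-B4)*(A1-A3) = 0 \<Longrightarrow> (B1-B4)*(A1-A3) = 0 \<Longrightarrow> False"
  using n2 n5 by auto

lemma sl_cT: "(B3-B4)*A3*(A1-A2) = 0 \<Longrightarrow> (B1-B4)*A2*A3*(A1-A2) = 0 \<Longrightarrow> False"
  using n1 n3 n5 n7 by auto

lemma sl_M1: assumes "k \<noteq> 0" "B3 \<noteq> B4"
  "k*(A1-A3)*((B1-B4) + (B3-B4)*k) = 0" "k*(A1-A3)*(2*(B1-B4) + (B3-B4)*k) = 0"
  shows False
proof -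
  have "(B1-B4) + (B3-B4)*k = 0" "2*(B1-B4) + (B3-B4)*k = 0" using assms n2 by auto
  then have "(B3-B4)*k = 0" by algebra
  then show False using assms by simp
qed

lemma sl_MX: assumes "k \<noteq> 0"
  "k*(A1-A3)*((B1-B4) + (B3-B4)*k) = 0" "A2*(B1 + B3*k) = 0"
  "(A1+A2)*(B1+B3*k) - k*((A1-A3)+(A2-A3))*((B1-B4)+(B3-B4)*k) = 0"
  shows False
proof -
  have h1: "(B1-B4) + (B3-B4)*k = 0" using assms n2 by auto
  then have "(A1+A2)*(B1+B3*k) = 0" using assms(4) by simp
  then have h2: "B1 + B3*k = 0" using assms(3) n1 by auto
  have "B1*(B3-B4) - B3*(B1-B4) = 0" using h1 h2 by algebra
  then show False using keyB by simp
qed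

lemma sl_MXY: assumes "A2*(B1 + B3*k) = 0" "2*A2*(B1 + 2*B3*k) = 0"
  "A1*B1 - k*(A1-A3)*(B1-B4) = 0" "2*A1*B1 - 4*k*(A1-A3)*(B1-B4) = 0"
  shows False
proof -
  have "A2 = 0"
  proof (rule ccontr)
    assume "A2 \<noteq> 0"
    then have "B1 + B3*k = 0" "B1 + 2*B3*k = 0" using assms by auto
    then have "B1 = 0" by algebra
    then show False using n4 by simp
  qed
  moreover have "A1*B1 = 0" using assms(3,4) by algebra
  ultimately show False using n1 n4 by auto
qed

lemma sl_MXT: "B1 + B3*k*A2 = 0 \<Longrightarrow> 2*(B1 + 2*B3*k*A2) = 0 \<Longrightarrow> False"
  using n4 by algebra

lemma sl_MYT: "B1 - k*(A1-A3)*(B1-B4) = 0 \<Longrightarrow> 2*B1 - 4*k*(A1-A3)*(B1-B4) = 0 \<Longrightarrow> False"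
  using n4 by algebra


lemma sl_MY: assumes k: "k \<noteq> 0" and b3: "B3 \<noteq> B4"
  and q10: "A1*B1 - k*(A1-A3)*(B1-B4) = 0"
  and q01: "A2*B3 - k*(A2-A3)*(B3-B4) = 0"
  and q11: "(A1+A2)*(B1+B3*k) - k*((A1-A3)+(A2-A3))*((B1-B4)+(B3-B4)*k) = 0"
  shows "C9s A1 A2 A3 B1 B3 B4 \<or> C10s A1 A2 A3 B1 B3 B4"
proof -
  have Y2: "A2*B1 + A1*B3*k - (A1-A3)*(B3-B4)*k^2 - (A2-A3)*(B1-B4)*k = 0"
    using q10 q01 q11 by algebra
  have "(B1*(B3-B4) - B3*(B1-B4)) * (A2*(B1-B4) - A1*(B3-B4)*k) = 0"
    using q10 q01 Y2 by algebra
  then have D2: "A2*(B1-B4) = A1*(B3-B4)*k" using keyB by simp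
  show ?thesis
  proof (cases "B1 = B4")
    case True
    have A1: "A1 = 0" using q10 True n4 by simp
    have G: "A2 * ((A2*B3 - (A2-A3)*B1) * (A3*B3 + (A2-A3)*B1)) = 0"
      using q01 Y2 A1 True by algebra
    have "A2 \<noteq> 0"
    proof
      assume "A2 = 0"
      then have "k*A3*(B3-B4) = 0" using q01 by simp
      then show False using k b3 n3 by simp
    qed
    then have "(A2*B3 - (A2-A3)*B1) * (A3*B3 + (A2-A3)*B1) = 0" using G by simp
    then have "A2*B3 - (A2-A3)*B1 = 0 \<or> A3*B3 + (A2-A3)*B1 = 0" by simp
    then show ?thesis
    proof
      assume h: "A2*B3 - (A2-A3)*B1 = 0"
      have "C10s A1 A2 A3 B1 B3 B4" unfolding C10s_def using h A1 True by algebra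
      then show ?thesis ..
    next
      assume h: "A3*B3 + (A2-A3)*B1 = 0"
      have "C9s A1 A2 A3 B1 B3 B4" unfolding C9s_def using h A1 True by algebra
      then show ?thesis ..
    qed
  next
    case False
    have "(B3-B4)*k*((A2-A3)*(B1-B4) - A1*B3) = 0" using q01 D2 by algebra
    then have Z1: "(A2-A3)*(B1-B4) = A1*B3" using k b3 by simp
    have A1: "A1 \<noteq> 0"
    proof
      assume "A1 = 0"
      then have "A2*(B1-B4) = 0" using D2 by simp
      then have "A2 = 0" using False by simp
      then show False using n1 \<open>A1 = 0\<close> by simp
    qed
    have "A1*((k-1)*(k*(B3-B4) - B1)) = 0" using q10 Z1 D2 by algebra
    then have "k = 1 \<or> k*(B3-B4) = B1" using A1 by auto
    then show ?thesis
    proof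
      assume k1: "k = 1"
      have "C9s A1 A2 A3 B1 B3 B4" unfolding C9s_def using q10 q01 D2 k1 by algebra
      then show ?thesis ..
    next
      assume kb: "k*(B3-B4) = B1"
      have e2: "A2*B1 - A2*B3 - A3*B1 = 0" using q01 kb by algebra
      have "B1*(A1*B1 - A1*B3 - A3*B1 + A3*B4) = 0" using q10 kb by algebra
      then have e3: "A1*B1 - A1*B3 - A3*B1 + A3*B4 = 0" using n4 by simp
      have "A3*(-A1*B3 + A2*B3 - A2*B4 + A3*B4) = 0" using e2 e3 by algebra
      then have e1: "-A1*B3 + A2*B3 - A2*B4 + A3*B4 = 0" using n3 by simp
      have "C10s A1 A2 A3 B1 B3 B4" unfolding C10s_def using e1 e2 e3 by simp
      then show ?thesis ..
    qed
  qed
qed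

lemma sl_MT: assumes k: "k \<noteq> 0" and b3: "B3 \<noteq> B4"
  and t10: "(B1-B4) + (B3-B4)*k*A1 = 0"
  and t01: "A2*(B3 - k*(A2-A3)*(B3-B4)) = 0"
  and t11: "(B1 + B3*k*(A1+A2)) - k*((A1-A3)+(A2-A3))*((B1-B4) + (B3-B4)*k*(A1+A2)) = 0"
  shows "C11s A1 A2 A3 B1 B3 B4 \<or> C12s A1 A2 A3 B1 B3 B4"
proof (cases "A2 = 0")
  case True
  have h: "B1 + B3*k*A1 = 0" using t10 t11 True by algebra
  have "B1*(B3-B4) - B3*(B1-B4) = 0" using t10 h by algebra
  then show ?thesis using keyB by simp
next
  case False
  then have u1: "B3 = k*(A2-A3)*(B3-B4)" using t01 by simp
  have L3: "B1 + k*A1*B3 - k^2*(A1-A3)*A2*(B3-B4) = 0" using t10 t11 u1 by algebra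
  have "(B3-B4)*((k*A3 + 1)*(k*(A1-A2) + 1)) = 0" using t10 u1 L3 by algebra
  then have "k*A3 + 1 = 0 \<or> k*(A1-A2) + 1 = 0" using b3 by simp
  then show ?thesis
  proof
    assume h: "k*A3 + 1 = 0"
    have e1: "-A2*B3 + A2*B4 - A3*B4 = 0" using u1 h by algebra
    have e2: "-A1*B3 + A1*B4 + A3*B1 - A3*B4 = 0" using t10 h by algebra
    have "A3*(A1*B4 + A2*B1 - A2*B4) = 0" using e1 e2 by algebra
    then have e3: "A1*B4 + A2*B1 - A2*B4 = 0" using n3 by simp
    have "C11s A1 A2 A3 B1 B3 B4" unfolding C11s_def using e1 e2 e3 by simp
    then show ?thesis ..
  next
    assume h: "k*(A1-A2) + 1 = 0"
    have "C12s A1 A2 A3 B1 B3 B4" unfolding C12s_def using t10 u1 L3 h by algebra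
    then show ?thesis ..
  qed
qed

end

lemma lf_eq_0: "lf a b = 0 \<longleftrightarrow> a = 0 \<and> b = 0"
proof
  assume "lf a b = 0"
  then have "ev (lf a b) 1 0 = 0" "ev (lf a b) 0 1 = 0" by simp_all
  then show "a = 0 \<and> b = 0" by simp
qed (simp add: lf_def)

lemma split1:
  fixes w p m :: "complex poly poly"
  assumes p: "prime_elem p" and d: "w dvd p * m"
  shows "w dvd m \<or> (\<exists>w'. w = p * w' \<and> w' dvd m)"
proof -
  obtain k where k: "p * m = w * k" using d by (elim dvdE)
  have p0: "p \<noteq> 0" using p by (simp add: prime_elem_def)
  show ?thesis
  proof (cases "p dvd w")
    case True
    then obtain w' where w': "w = p * w'" by (elim dvdE)
    then have "p * m = p * (w' * k)" using k by (simp add: mult.assoc)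
    then have "m = w' * k" using p0 by simp
    then show ?thesis using w' by auto
  next
    case False
    have "p dvd w * k" using k by (metis dvd_triv_left)
    then have "p dvd k" using False p prime_elem_dvd_multD by blast
    then obtain k' where k': "k = p * k'" by (elim dvdE)
    then have "p * m = p * (w * k')" using k by (simp add: algebra_simps)
    then have "m = w * k'" using p0 by simp
    then show ?thesis by auto
  qed
qed

lemma split3:
  fixes w p1 p2 p3 :: "complex poly poly"
  assumes p1: "prime_elem p1" and p2: "prime_elem p2" and p3: "prime_elem p3"
    and d: "w dvd p1 * (p2 * p3)"
  shows "\<exists>u M. is_unit u \<and> w = M * u \<and> M \<in> {1, p1, p2, p3, p1*p2, p1*p3, p2*p3, p1*(p2*p3)}"
proof -
  have two: "\<exists>u M. is_unit u \<and> v = M * u \<and> M \<in> {1, p2, p3, p2*p3}" if v: "v dvd p2 * p3" for v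
  proof -
    have three: "\<exists>u M. is_unit u \<and> v' = M * u \<and> M \<in> {1, p3}" if v': "v' dvd p3" for v'
    proof -
      have "v' dvd p3 * 1" using v' by simp
      from split1[OF p3 this] show ?thesis
      proof
        assume "v' dvd 1" then show ?thesis by (intro exI[of _ v'] exI[of _ 1]) auto
      next
        assume "\<exists>w'. v' = p3 * w' \<and> w' dvd 1"
        then obtain w' where "v' = p3 * w'" "w' dvd 1" by blast
        then show ?thesis by (intro exI[of _ w'] exI[of _ p3]) auto
      qed
    qed
    from split1[OF p2 v] show ?thesis
    proof
      assume "v dvd p3"
      from three[OF this] show ?thesis by blast
    next
      assume "\<exists>w'. v = p2 * w' \<and> w' dvd p3"
      then obtain w' where w': "v = p2 * w'" "w' dvd p3" by blast
      from three[OF w'(2)] obtain u M where "is_unit u" "w' = M * u" "M \<in> {1, p3}" by blast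
      then show ?thesis using w'(1) by (intro exI[of _ u] exI[of _ "p2 * M"]) (auto simp: mult.assoc)
    qed
  qed
  from split1[OF p1 d] show ?thesis
  proof
    assume "w dvd p2 * p3"
    from two[OF this] show ?thesis by blast
  next
    assume "\<exists>w'. w = p1 * w' \<and> w' dvd p2 * p3"
    then obtain w' where w': "w = p1 * w'" "w' dvd p2 * p3" by blast
    from two[OF w'(2)] obtain u M where "is_unit u" "w' = M * u" "M \<in> {1, p2, p3, p2*p3}" by blast
    then show ?thesis using w'(1) by (intro exI[of _ u] exI[of _ "p1 * M"]) (auto simp: mult.assoc)
  qed
qed

lemma deg1_form: "degree (g::'a::comm_ring_1 poly) \<le> 1 \<Longrightarrow> g = [:coeff g 0, coeff g 1:]"
  by (rule poly_eqI) (auto simp: coeff_pCons coeff_eq_0 split: nat.split)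

lemma root_of_deg1:
  fixes g :: "complex poly poly poly"
  assumes "degree g \<le> 1" "is_unit (coeff g 1)"
  shows "\<exists>w. poly g w = 0"
proof -
  obtain v where v: "1 = coeff g 1 * v" using assms(2) by (elim dvdE)
  have "poly g (- (coeff g 0 * v)) = coeff g 0 - coeff g 0 * (coeff g 1 * v)"
    by (subst deg1_form[OF assms(1)]) (simp add: algebra_simps)
  also have "\<dots> = 0" using v[symmetric] by simp
  finally show ?thesis by blast
qed

definition Ac :: "complex \<Rightarrow> complex \<Rightarrow> complex \<Rightarrow> complex \<Rightarrow> complex \<Rightarrow> complex \<Rightarrow> complex poly poly" where
  "Ac A1 A2 A3 B1 B3 B4 = - (kc (B3 - B4) * lf (A1 - A3) (A2 - A3))"
definition Bc :: "complex \<Rightarrow> complex \<Rightarrow> complex \<Rightarrow> complex \<Rightarrow> complex \<Rightarrow> complex \<Rightarrow> complex poly poly" where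
  "Bc A1 A2 A3 B1 B3 B4 = kc B3 * Y * lf A1 A2 - kc (B1 - B4) * X * lf (A1 - A3) (A2 - A3)"
definition Cc :: "complex \<Rightarrow> complex \<Rightarrow> complex \<Rightarrow> complex \<Rightarrow> complex \<Rightarrow> complex \<Rightarrow> complex poly poly" where
  "Cc A1 A2 A3 B1 B3 B4 = kc B1 * X * Y * lf A1 A2"

context NC begin

abbreviation "TR \<equiv> lf A1 A2"
abbreviation "VR \<equiv> lf (A1 - A3) (A2 - A3)"
abbreviation "AA \<equiv> Ac A1 A2 A3 B1 B3 B4"
abbreviation "BB \<equiv> Bc A1 A2 A3 B1 B3 B4"
abbreviation "CC \<equiv> Cc A1 A2 A3 B1 B3 B4"

lemma TR_nz: "TR \<noteq> 0" using n1 by (auto simp: lf_eq_0)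
lemma TR_irr: "irreducible TR" using n1 by (intro lf_irred) auto
lemma VR_irr: "irreducible VR" using n2 by (intro lf_irred) auto
lemma X_irr: "irreducible X" unfolding X_lf by (intro lf_irred) auto
lemma Y_irr: "irreducible Y" unfolding Y_lf by (intro lf_irred) auto
lemma X_nz: "X \<noteq> 0" using X_irr by auto
lemma Y_nz: "Y \<noteq> 0" using Y_irr by auto
lemma CC_alt: "CC = kc B1 * (X * (Y * TR))" by (simp add: Cc_def mult.assoc)
lemma CC_nz: "CC \<noteq> 0" using n4 TR_nz X_nz Y_nz by (simp add: Cc_def)

lemma lin_dvd: fixes l p P :: "complex poly poly" assumes "irreducible l" "prime_elem p" "p dvd l" "p dvd P" shows "l dvd P"
proof -
  have "l dvd p \<or> is_unit p" using irreducibleD'[OF assms(1,3)] .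
  then have "l dvd p" using assms(2) prime_elem_not_unit by blast
  then show ?thesis using assms(4) dvd_trans by blast
qed

lemma content_false:
  assumes p: "prime_elem p" and dA: "p dvd AA" and dB: "p dvd BB" and dC: "p dvd CC"
  shows False
proof -
  have u: "is_unit (kc B1)" using n4 by (rule kc_unit)
  from dC have "p dvd kc B1 \<or> p dvd X * (Y * TR)" unfolding CC_alt using p prime_elem_dvd_multD by blast
  moreover have "\<not> p dvd kc B1" using u p prime_elem_not_unit dvd_unit_imp_unit by blast
  ultimately have "p dvd X * (Y * TR)" by blast
  then have "p dvd X \<or> p dvd Y \<or> p dvd TR" using p prime_elem_dvd_multD by blast
  then show False
  proof (elim disjE)
    assume "p dvd X"
    then have "X dvd AA" "X dvd BB" using lin_dvd[OF X_irr p] dA dB by blast+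
    then have "ev AA 0 (-1) = 0" "ev BB 0 (-1) = 0" unfolding X_lf by (auto dest: lf_dvd_ev)
    then have "(B3-B4)*(A2-A3) = 0" "B3*A2 = 0" by (simp_all add: Ac_def Bc_def algebra_simps)
    then show False by (rule sl_cX)
  next
    assume "p dvd Y"
    then have "Y dvd AA" "Y dvd BB" using lin_dvd[OF Y_irr p] dA dB by blast+
    then have "ev AA 1 0 = 0" "ev BB 1 0 = 0" unfolding Y_lf by (auto dest: lf_dvd_ev)
    then have "(B3-B4)*(A1-A3) = 0" "(B1-B4)*(A1-A3) = 0" by (simp_all add: Ac_def Bc_def algebra_simps)
    then show False by (rule sl_cY)
  next
    assume "p dvd TR"
    then have "TR dvd AA" "TR dvd BB" using lin_dvd[OF TR_irr p] dA dB by blast+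
    then have h: "ev AA A2 (-A1) = 0" "ev BB A2 (-A1) = 0" by (auto dest: lf_dvd_ev)
    have "(B3-B4)*A3*(A1-A2) = 0" using h(1) unfolding Ac_def ev_minus ev_mult ev_kc ev_lf by algebra
    moreover have "(B1-B4)*A2*A3*(A1-A2) = 0" using h(2) unfolding Bc_def ev_diff ev_mult ev_kc ev_lf ev_X ev_Y by algebra
    ultimately show False by (rule sl_cT)
  qed
qed

end

lemmas evs = ev_add ev_diff ev_minus ev_mult ev_kc ev_lf ev_X ev_Y

context NC begin

lemma root_case:
  assumes b3: "B3 \<noteq> B4" and r: "CC + w*(BB + w*AA) = 0"
  shows "C9s A1 A2 A3 B1 B3 B4 \<or> C10s A1 A2 A3 B1 B3 B4 \<or> C11s A1 A2 A3 B1 B3 B4 \<or> C12s A1 A2 A3 B1 B3 B4"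
proof -
  have Qid: "CC + w*(BB + w*AA) = Y*TR*(kc B1*X + kc B3*w) - w*VR*(kc (B1-B4)*X + kc (B3-B4)*w)"
    unfolding Ac_def Bc_def Cc_def by algebra
  have P0: "Y*TR*(kc B1*X + kc B3*w) - w*VR*(kc (B1-B4)*X + kc (B3-B4)*w) = 0"
    using r Qid by simp
  have "CC = w * (- (BB + w*AA))" using r by algebra
  then have "w dvd CC" by simp
  then have "w dvd X * (Y * TR)" unfolding CC_alt using dvd_mult_unit_iff'[OF kc_unit[OF n4]] by simp
  moreover have pX: "prime_elem X" and pY: "prime_elem Y" and pT: "prime_elem TR"
    using X_irr Y_irr TR_irr prime_elem_iff_irreducible by blast+
  ultimately obtain u M where u: "is_unit u" "w = M * u"
    and M: "M \<in> {1, X, Y, TR, X*Y, X*TR, Y*TR, X*(Y*TR)}"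
    using split3 by blast
  obtain k where k: "u = kc k" "k \<noteq> 0" using u(1) by (rule unit_R)
  have w: "w = M * kc k" using u k by simp
  note Pw = P0[unfolded w]
  have XY0: "X*Y \<noteq> 0" "X*TR \<noteq> 0" "Y*TR \<noteq> 0" "X*(Y*TR) \<noteq> 0" using X_nz Y_nz TR_nz by simp_all
  from M show ?thesis
  proof (elim insertE emptyE)
    assume M1: "M = 1"
    have "ev (Y*TR*(kc B1*X + kc B3*(1 * kc k)) - (1 * kc k)*VR*(kc (B1-B4)*X + kc (B3-B4)*(1 * kc k))) 1 0 = 0"
      "ev (Y*TR*(kc B1*X + kc B3*(1 * kc k)) - (1 * kc k)*VR*(kc (B1-B4)*X + kc (B3-B4)*(1 * kc k))) 2 0 = 0"
      using Pw M1 by simp_all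
    then have "k*(A1-A3)*((B1-B4) + (B3-B4)*k) = 0" "k*(A1-A3)*(2*(B1-B4) + (B3-B4)*k) = 0"
      unfolding evs mult_1 by algebra+
    then show ?thesis using sl_M1[OF k(2) b3] by blast
  next
    assume MX: "M = X"
    define Q2 where "Q2 = Y*TR*(kc B1 + kc B3*kc k) - kc k*VR*X*(kc (B1-B4) + kc (B3-B4)*kc k)"
    have "X * Q2 = 0" using Pw unfolding MX Q2_def by algebra
    then have Q0: "Q2 = 0" using X_nz by simp
    have "ev Q2 1 0 = 0" "ev Q2 0 1 = 0" "ev Q2 1 1 = 0" using Q0 by simp_all
    then have "k*(A1-A3)*((B1-B4) + (B3-B4)*k) = 0" "A2*(B1 + B3*k) = 0"
      "(A1+A2)*(B1+B3*k) - k*((A1-A3)+(A2-A3))*((B1-B4)+(B3-B4)*k) = 0"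
      unfolding Q2_def evs by algebra+
    then show ?thesis using sl_MX[OF k(2)] by blast
  next
    assume MY: "M = Y"
    define Q2 where "Q2 = TR*(kc B1*X + kc B3*Y*kc k) - kc k*VR*(kc (B1-B4)*X + kc (B3-B4)*Y*kc k)"
    have "Y * Q2 = 0" using Pw unfolding MY Q2_def by algebra
    then have Q0: "Q2 = 0" using Y_nz by simp
    have e: "ev Q2 1 0 = 0" "ev Q2 0 1 = 0" "ev Q2 1 1 = 0" using Q0 by simp_all
    have q10: "A1*B1 - k*(A1-A3)*(B1-B4) = 0" using e(1) unfolding Q2_def evs by algebra
    have "k*(A2*B3 - k*(A2-A3)*(B3-B4)) = 0" using e(2) unfolding Q2_def evs by algebra
    then have q01: "A2*B3 - k*(A2-A3)*(B3-B4) = 0" using k(2) by simp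
    have q11: "(A1+A2)*(B1+B3*k) - k*((A1-A3)+(A2-A3))*((B1-B4)+(B3-B4)*k) = 0"
      using e(3) unfolding Q2_def evs by algebra
    from sl_MY[OF k(2) b3 q10 q01 q11] show ?thesis by blast
  next
    assume MT: "M = TR"
    define Q2 where "Q2 = Y*(kc B1*X + kc B3*TR*kc k) - kc k*VR*(kc (B1-B4)*X + kc (B3-B4)*TR*kc k)"
    have "TR * Q2 = 0" using Pw unfolding MT Q2_def by algebra
    then have Q0: "Q2 = 0" using TR_nz by simp
    have e: "ev Q2 1 0 = 0" "ev Q2 0 1 = 0" "ev Q2 1 1 = 0" using Q0 by simp_all
    have "k*(A1-A3)*((B1-B4) + (B3-B4)*k*A1) = 0" using e(1) unfolding Q2_def evs by algebra
    then have t10: "(B1-B4) + (B3-B4)*k*A1 = 0" using k(2) n2 by simp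
    have "k*(A2*(B3 - k*(A2-A3)*(B3-B4))) = 0" using e(2) unfolding Q2_def evs by algebra
    then have t01: "A2*(B3 - k*(A2-A3)*(B3-B4)) = 0" using k(2) by simp
    have t11: "(B1 + B3*k*(A1+A2)) - k*((A1-A3)+(A2-A3))*((B1-B4) + (B3-B4)*k*(A1+A2)) = 0"
      using e(3) unfolding Q2_def evs by algebra
    from sl_MT[OF k(2) b3 t10 t01 t11] show ?thesis by blast
  next
    assume MXY: "M = X*Y"
    define Q2 where "Q2 = TR*(kc B1 + kc B3*Y*kc k) - kc k*VR*(kc (B1-B4)*X + kc (B3-B4)*X*Y*kc k)"
    have "(X*Y) * Q2 = 0" using Pw unfolding MXY Q2_def by algebra
    then have Q0: "Q2 = 0" using XY0 by simp
    have e: "ev Q2 0 1 = 0" "ev Q2 0 2 = 0" "ev Q2 1 0 = 0" "ev Q2 2 0 = 0" using Q0 by simp_all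
    have "A2*(B1 + B3*k) = 0" "2*A2*(B1 + 2*B3*k) = 0"
      "A1*B1 - k*(A1-A3)*(B1-B4) = 0" "2*A1*B1 - 4*k*(A1-A3)*(B1-B4) = 0"
      using e unfolding Q2_def evs by algebra+
    then show ?thesis using sl_MXY by blast
  next
    assume MXT: "M = X*TR"
    define Q2 where "Q2 = Y*(kc B1 + kc B3*TR*kc k) - kc k*VR*(kc (B1-B4)*X + kc (B3-B4)*X*TR*kc k)"
    have "(X*TR) * Q2 = 0" using Pw unfolding MXT Q2_def by algebra
    then have Q0: "Q2 = 0" using XY0 by simp
    have e: "ev Q2 0 1 = 0" "ev Q2 0 2 = 0" using Q0 by simp_all
    have "B1 + B3*k*A2 = 0" "2*(B1 + 2*B3*k*A2) = 0" using e unfolding Q2_def evs by algebra+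
    then show ?thesis using sl_MXT by blast
  next
    assume MYT: "M = Y*TR"
    define Q2 where "Q2 = (kc B1*X + kc B3*Y*TR*kc k) - kc k*VR*(kc (B1-B4)*X + kc (B3-B4)*Y*TR*kc k)"
    have "(Y*TR) * Q2 = 0" using Pw unfolding MYT Q2_def by algebra
    then have Q0: "Q2 = 0" using XY0 by simp
    have e: "ev Q2 1 0 = 0" "ev Q2 2 0 = 0" using Q0 by simp_all
    have "B1 - k*(A1-A3)*(B1-B4) = 0" "2*B1 - 4*k*(A1-A3)*(B1-B4) = 0" using e unfolding Q2_def evs by algebra+
    then show ?thesis using sl_MYT by blast
  next
    assume MXYT: "M = X*(Y*TR)"
    define Q2 where "Q2 = (kc B1 + kc B3*Y*TR*kc k) - kc k*VR*X*(kc (B1-B4) + kc (B3-B4)*Y*TR*kc k)"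
    have "(X*(Y*TR)) * Q2 = 0" using Pw unfolding MXYT Q2_def by algebra
    then have Q0: "Q2 = 0" using XY0 by simp
    have e: "ev Q2 0 0 = 0" using Q0 by simp
    have "B1 = 0" using e unfolding Q2_def evs by algebra
    then show ?thesis using n4 by blast
  qed
qed

end

context NC begin

lemma core:
  fixes f g h :: "complex poly poly poly"
  assumes f: "f = [:CC, BB, AA:]" and fgh: "f = g * h" and g: "\<not> is_unit g" and h: "\<not> is_unit h"
  shows "C9s A1 A2 A3 B1 B3 B4 \<or> C10s A1 A2 A3 B1 B3 B4 \<or> C11s A1 A2 A3 B1 B3 B4 \<or> C12s A1 A2 A3 B1 B3 B4"
proof -
  have f0: "f \<noteq> 0" using f CC_nz by auto
  then have g0: "g \<noteq> 0" and h0: "h \<noteq> 0" using fgh by auto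
  have degf: "degree f \<le> 2" unfolding f
    by (rule degree_le) (auto simp: coeff_pCons split: nat.split)
  have deg: "degree f = degree g + degree h" using fgh g0 h0 by (simp add: degree_mult_eq)
  have content: False if c0: "c \<noteq> 0" "\<not> is_unit c" "c dvd AA" "c dvd BB" "c dvd CC" for c
  proof -
    obtain p where p: "p dvd c" "prime p" using prime_divisor_exists[OF c0(1,2)] by blast
    have "prime_elem p" using p(2) by blast
    then show False using content_false p(1) c0(3-5) dvd_trans by blast
  qed
  show ?thesis
  proof (cases "degree g = 0")
    case True
    then obtain c where c: "g = [:c:]" by (rule degree_eq_zeroE)
    have "c \<noteq> 0" using g0 c by simp
    moreover have "\<not> is_unit c" using g c by (simp add: is_unit_const_poly_iff)
    moreover have "c dvd coeff f i" for i using fgh c by simp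
    then have "c dvd AA" "c dvd BB" "c dvd CC"
      using f by (metis coeff_pCons_0 coeff_pCons_Suc numeral_2_eq_2 One_nat_def)+
    ultimately show ?thesis using content by blast
  next
    case gpos: False
    show ?thesis
    proof (cases "degree h = 0")
      case True
      then obtain c where c: "h = [:c:]" by (rule degree_eq_zeroE)
      have "c \<noteq> 0" using h0 c by simp
      moreover have "\<not> is_unit c" using h c by (simp add: is_unit_const_poly_iff)
      moreover have "c dvd coeff f i" for i using fgh c by (simp add: mult.commute)
      then have "c dvd AA" "c dvd BB" "c dvd CC"
        using f by (metis coeff_pCons_0 coeff_pCons_Suc numeral_2_eq_2 One_nat_def)+
      ultimately show ?thesis using content by blast
    next
      case hpos: False
      have dg: "degree g = 1" and dh: "degree h = 1" and df: "degree f = 2"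
        using deg degf gpos hpos by auto
      have "coeff f 2 = coeff g 1 * coeff h 1"
        using coeff_mult_degree_sum[of g h] dg dh fgh by (simp add: numeral_2_eq_2)
      moreover have "coeff f 2 = AA" using f by (simp add: numeral_2_eq_2)
      ultimately have A: "AA = coeff g 1 * coeff h 1" by simp
      have "AA \<noteq> 0" using df f0 \<open>coeff f 2 = AA\<close> by (metis leading_coeff_0_iff)
      then have b3: "B3 \<noteq> B4" by (auto simp: Ac_def)
      have "AA = kc (-(B3 - B4)) * VR" unfolding Ac_def kc_minus by simp
      then have "irreducible AA" using irreducible_mult_unit_left[OF kc_unit] VR_irr b3 by simp
      then have "is_unit (coeff g 1) \<or> is_unit (coeff h 1)" using A irreducibleD by blast
      then obtain w where "poly g w = 0 \<or> poly h w = 0"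
        using root_of_deg1 dg dh by (metis order_refl)
      then have "poly f w = 0" using fgh by auto
      then have "CC + w*(BB + w*AA) = 0" using f by simp
      then show ?thesis by (rule root_case[OF b3])
    qed
  qed
qed

end

lemma bridge9:
  fixes a11 a12 a21 a22 b11 b12 b21 b22 :: real
  assumes h: "C9s (cor (a11 - a22)) (cor (a12 - a22)) (cor (a21 - a22)) (cor (b11 - b12)) (cor (b21 - b12)) (cor (b22 - b12))"
  shows "a12 * (b12 - b22) + a21 * (b22 - b21) + a22 * (b21 - b12) = 0 \<and> a11 * (b22 - b12) + a21 * (b11 - b22) + a22 * (b12 - b11) = 0 \<and> a11 * (b22 - b21) + a12 * (b11 - b22) + a22 * (b21 - b11) = 0"
proof -
  have r: "\<And>e::real. cor e = 0 \<Longrightarrow> e = 0" by simp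
  note ofr = of_real_add of_real_diff of_real_mult
  from h have h1: "-cor (a12 - a22)*cor (b22 - b12) - cor (a21 - a22)*cor (b21 - b12) + cor (a21 - a22)*cor (b22 - b12) = 0"
    and h2: "cor (a11 - a22)*cor (b22 - b12) + cor (a21 - a22)*cor (b11 - b12) - cor (a21 - a22)*cor (b22 - b12) = 0"
    and h3: "-cor (a11 - a22)*cor (b21 - b12) + cor (a11 - a22)*cor (b22 - b12) + cor (a12 - a22)*cor (b11 - b12) - cor (a12 - a22)*cor (b22 - b12) = 0"
    unfolding C9s_def by auto
  note hh = h1[unfolded ofr] h2[unfolded ofr] h3[unfolded ofr]
  show ?thesis
  proof (intro conjI)
    show "a12 * (b12 - b22) + a21 * (b22 - b21) + a22 * (b21 - b12) = 0" by (rule r) (use hh in \<open>unfold ofr, algebra\<close>)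
    show "a11 * (b22 - b12) + a21 * (b11 - b22) + a22 * (b12 - b11) = 0" by (rule r) (use hh in \<open>unfold ofr, algebra\<close>)
    show "a11 * (b22 - b21) + a12 * (b11 - b22) + a22 * (b21 - b11) = 0" by (rule r) (use hh in \<open>unfold ofr, algebra\<close>)
  qed
qed

lemma bridge10:
  fixes a11 a12 a21 a22 b11 b12 b21 b22 :: real
  assumes h: "C10s (cor (a11 - a22)) (cor (a12 - a22)) (cor (a21 - a22)) (cor (b11 - b12)) (cor (b21 - b12)) (cor (b22 - b12))"
  shows "a11 * (b12 - b21) + a12 * (b21 - b22) + a21 * (b22 - b12) = 0 \<and> a12 * (b11 - b21) + a21 * (b12 - b11) + a22 * (b21 - b12) = 0 \<and> a11 * (b11 - b21) + a21 * (b22 - b11) + a22 * (b21 - b22) = 0"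
proof -
  have r: "\<And>e::real. cor e = 0 \<Longrightarrow> e = 0" by simp
  note ofr = of_real_add of_real_diff of_real_mult
  from h have h1: "-cor (a11 - a22)*cor (b21 - b12) + cor (a12 - a22)*cor (b21 - b12) - cor (a12 - a22)*cor (b22 - b12) + cor (a21 - a22)*cor (b22 - b12) = 0"
    and h2: "cor (a12 - a22)*cor (b11 - b12) - cor (a12 - a22)*cor (b21 - b12) - cor (a21 - a22)*cor (b11 - b12) = 0"
    and h3: "cor (a11 - a22)*cor (b11 - b12) - cor (a11 - a22)*cor (b21 - b12) - cor (a21 - a22)*cor (b11 - b12) + cor (a21 - a22)*cor (b22 - b12) = 0"
    unfolding C10s_def by auto
  note hh = h1[unfolded ofr] h2[unfolded ofr] h3[unfolded ofr]
  show ?thesis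
  proof (intro conjI)
    show "a11 * (b12 - b21) + a12 * (b21 - b22) + a21 * (b22 - b12) = 0" by (rule r) (use hh in \<open>unfold ofr, algebra\<close>)
    show "a12 * (b11 - b21) + a21 * (b12 - b11) + a22 * (b21 - b12) = 0" by (rule r) (use hh in \<open>unfold ofr, algebra\<close>)
    show "a11 * (b11 - b21) + a21 * (b22 - b11) + a22 * (b21 - b22) = 0" by (rule r) (use hh in \<open>unfold ofr, algebra\<close>)
  qed
qed

lemma bridge11:
  fixes a11 a12 a21 a22 b11 b12 b21 b22 :: real
  assumes h: "C11s (cor (a11 - a22)) (cor (a12 - a22)) (cor (a21 - a22)) (cor (b11 - b12)) (cor (b21 - b12)) (cor (b22 - b12))"
  shows "a12 * (b22 - b21) + a21 * (b12 - b22) + a22 * (b21 - b12) = 0 \<and> a11 * (b22 - b21) + a21 * (b11 - b22) + a22 * (b21 - b11) = 0 \<and> a11 * (b22 - b12) + a12 * (b11 - b22) + a22 * (b12 - b11) = 0"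
proof -
  have r: "\<And>e::real. cor e = 0 \<Longrightarrow> e = 0" by simp
  note ofr = of_real_add of_real_diff of_real_mult
  from h have h1: "-cor (a12 - a22)*cor (b21 - b12) + cor (a12 - a22)*cor (b22 - b12) - cor (a21 - a22)*cor (b22 - b12) = 0"
    and h2: "-cor (a11 - a22)*cor (b21 - b12) + cor (a11 - a22)*cor (b22 - b12) + cor (a21 - a22)*cor (b11 - b12) - cor (a21 - a22)*cor (b22 - b12) = 0"
    and h3: "cor (a11 - a22)*cor (b22 - b12) + cor (a12 - a22)*cor (b11 - b12) - cor (a12 - a22)*cor (b22 - b12) = 0"
    unfolding C11s_def by auto
  note hh = h1[unfolded ofr] h2[unfolded ofr] h3[unfolded ofr]
  show ?thesis
  proof (intro conjI)
    show "a12 * (b22 - b21) + a21 * (b12 - b22) + a22 * (b21 - b12) = 0" by (rule r) (use hh in \<open>unfold ofr, algebra\<close>)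
    show "a11 * (b22 - b21) + a21 * (b11 - b22) + a22 * (b21 - b11) = 0" by (rule r) (use hh in \<open>unfold ofr, algebra\<close>)
    show "a11 * (b22 - b12) + a12 * (b11 - b22) + a22 * (b12 - b11) = 0" by (rule r) (use hh in \<open>unfold ofr, algebra\<close>)
  qed
qed

lemma bridge12:
  fixes a11 a12 a21 a22 b11 b12 b21 b22 :: real
  assumes h: "C12s (cor (a11 - a22)) (cor (a12 - a22)) (cor (a21 - a22)) (cor (b11 - b12)) (cor (b21 - b12)) (cor (b22 - b12))"
  shows "a11 * (b12 - b21) + a12 * (b22 - b12) + a21 * (b21 - b22) = 0 \<and> a12 * (b11 - b12) + a21 * (b21 - b11) + a22 * (b12 - b21) = 0 \<and> a11 * (b11 - b21) + a12 * (b22 - b12) + a21 * (b21 - b11) + a22 * (b12 - b22) = 0"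
proof -
  have r: "\<And>e::real. cor e = 0 \<Longrightarrow> e = 0" by simp
  note ofr = of_real_add of_real_diff of_real_mult
  from h have h1: "-cor (a11 - a22)*cor (b21 - b12) + cor (a12 - a22)*cor (b22 - b12) + cor (a21 - a22)*cor (b21 - b12) - cor (a21 - a22)*cor (b22 - b12) = 0"
    and h2: "cor (a12 - a22)*cor (b11 - b12) - cor (a21 - a22)*cor (b11 - b12) + cor (a21 - a22)*cor (b21 - b12) = 0"
    and h3: "cor (a11 - a22)*cor (b11 - b12) - cor (a11 - a22)*cor (b21 - b12) + cor (a12 - a22)*cor (b22 - b12) - cor (a21 - a22)*cor (b11 - b12) + cor (a21 - a22)*cor (b21 - b12) = 0"
    unfolding C12s_def by auto
  note hh = h1[unfolded ofr] h2[unfolded ofr] h3[unfolded ofr]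
  show ?thesis
  proof (intro conjI)
    show "a11 * (b12 - b21) + a12 * (b22 - b12) + a21 * (b21 - b22) = 0" by (rule r) (use hh in \<open>unfold ofr, algebra\<close>)
    show "a12 * (b11 - b12) + a21 * (b21 - b11) + a22 * (b12 - b21) = 0" by (rule r) (use hh in \<open>unfold ofr, algebra\<close>)
    show "a11 * (b11 - b21) + a12 * (b22 - b12) + a21 * (b21 - b11) + a22 * (b12 - b22) = 0" by (rule r) (use hh in \<open>unfold ofr, algebra\<close>)
  qed
qed

theorem theorem3p2:
  fixes a11 a12 a21 a22 b11 b12 b21 b22 :: real
  shows "reducible (spohn_cubic a11 a12 a21 a22 b11 b12 b21 b22) \<longleftrightarrow>
    spohn_cubic a11 a12 a21 a22 b11 b12 b21 b22 \<noteq> 0 \<and>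
    (a11 = a12 \<or> a11 = a21 \<or> a21 = a22 \<or> b11 = b12 \<or> b11 = b21 \<or> b12 = b22 \<or>
     (a12 = a22 \<and> b21 = b22) \<or> (a12 = a21 \<and> b12 = b21) \<or>
     (a12 * (b12 - b22) + a21 * (b22 - b21) + a22 * (b21 - b12) = 0 \<and>
      a11 * (b22 - b12) + a21 * (b11 - b22) + a22 * (b12 - b11) = 0 \<and>
      a11 * (b22 - b21) + a12 * (b11 - b22) + a22 * (b21 - b11) = 0) \<or>
     (a11 * (b12 - b21) + a12 * (b21 - b22) + a21 * (b22 - b12) = 0 \<and>
      a12 * (b11 - b21) + a21 * (b12 - b11) + a22 * (b21 - b12) = 0 \<and>
      a11 * (b11 - b21) + a21 * (b22 - b11) + a22 * (b21 - b22) = 0) \<or>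
     (a12 * (b22 - b21) + a21 * (b12 - b22) + a22 * (b21 - b12) = 0 \<and>
      a11 * (b22 - b21) + a21 * (b11 - b22) + a22 * (b21 - b11) = 0 \<and>
      a11 * (b22 - b12) + a12 * (b11 - b22) + a22 * (b12 - b11) = 0) \<or>
     (a11 * (b12 - b21) + a12 * (b22 - b12) + a21 * (b21 - b22) = 0 \<and>
      a12 * (b11 - b12) + a21 * (b21 - b11) + a22 * (b12 - b21) = 0 \<and>
      a11 * (b11 - b21) + a12 * (b22 - b12) + a21 * (b21 - b11) + a22 * (b12 - b22) = 0))"
  (is "?L \<longleftrightarrow> ?f \<noteq> 0 \<and> ?C")
proof
  assume "?f \<noteq> 0 \<and> ?C"
  then show ?L using if_dir by blast
next
  assume red: ?L
  then have f0: "?f \<noteq> 0" and nu: "\<not> ?f dvd 1" and ni: "\<not> irreducible ?f"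
    by (auto simp: reducible_def)
  show "?f \<noteq> 0 \<and> ?C"
  proof (rule conjI[OF f0], rule ccontr)
    assume nc: "\<not> ?C"
    define A1 where "A1 = cor (a11 - a22)"
    define A2 where "A2 = cor (a12 - a22)"
    define A3 where "A3 = cor (a21 - a22)"
    define B1 where "B1 = cor (b11 - b12)"
    define B3 where "B3 = cor (b21 - b12)"
    define B4 where "B4 = cor (b22 - b12)"
    interpret NC A1 A2 A3 B1 B3 B4
      by unfold_locales (use nc in \<open>auto simp: A1_def A2_def A3_def B1_def B3_def B4_def\<close>)
    obtain g h where fgh: "?f = g * h" and g: "\<not> is_unit g" and h: "\<not> is_unit h"
      using f0 nu ni unfolding irreducible_def by blast
    have e1: "cor (b21 - b22) = B3 - B4" "cor (b11 - b22) = B1 - B4"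
      "cor (a11 - a21) = A1 - A3" "cor (a12 - a21) = A2 - A3"
      by (simp_all add: A1_def A2_def A3_def B1_def B3_def B4_def)
    have fz: "?f = [:CC, BB, AA:]"
      unfolding spohn_z SA_def SB_def SC_def Ac_def Bc_def Cc_def e1
      by (simp add: A1_def A2_def B1_def B3_def)
    have "C9s A1 A2 A3 B1 B3 B4 \<or> C10s A1 A2 A3 B1 B3 B4 \<or> C11s A1 A2 A3 B1 B3 B4 \<or> C12s A1 A2 A3 B1 B3 B4"
      by (rule core[OF fz fgh g h])
    then show False
    proof (elim disjE)
      assume "C9s A1 A2 A3 B1 B3 B4"
      from bridge9[OF this[unfolded A1_def A2_def A3_def B1_def B3_def B4_def]] nc show False by blast
    next
      assume "C10s A1 A2 A3 B1 B3 B4"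
      from bridge10[OF this[unfolded A1_def A2_def A3_def B1_def B3_def B4_def]] nc show False by blast
    next
      assume "C11s A1 A2 A3 B1 B3 B4"
      from bridge11[OF this[unfolded A1_def A2_def A3_def B1_def B3_def B4_def]] nc show False by blast
    next
      assume "C12s A1 A2 A3 B1 B3 B4"
      from bridge12[OF this[unfolded A1_def A2_def A3_def B1_def B3_def B4_def]] nc show False by blast
    qed
  qed
qed

end
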